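(* For $1\le i\le m$ let $V^m_i$ be the $m\times m$ matrix whose $k$-th column is $(1,x_k,x_k^2,\dots,x_k^{m-i},y_k,y_k^2,\dots,y_k^{i-1})^T$. Then on $U^m_B$, for $1\le i\le m-1$, $$\sigma^y_m\det(V^m_i)=\pm\,t^{m-i}\det(V^m_{i+1}).$$ Consequently, with $G_1=\prod_{1\le a<b\le m}(x_a-x_b)$ and $G_i=\dfrac{(\sigma^y_m)^{i-1}}{t^{(i-1)(m-i/2)}}G_1$ for $2\le i\le m$, one has $G_i=\pm\det V^m_i$ for all $i$; in particular each $G_i$ is a regular function on $U^m_B$, $G_m=\pm\prod_{a<b}(y_a-y_b)$, and $\sigma^x_{m-i}G_{i+1}=\sigma^y_iG_i$ for $1\le i\le m-1$.
   Context: Local model: $B$ is an irreducible base with a regular function $t$, $U=\{xy=t\}\subset\mathbb A^2\times B$, and $U^m_B\subset\mathbb A^{2m}\times B$ is given by $x_1y_1=\dots=x_my_m=t$. $\sigma^x_i,\sigma^y_i$ are the elementary symmetric functions of the $x_k$, resp. the $y_k$. *)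

theory Defs
  imports "Jordan_Normal_Form.Determinant"
begin

text \<open>Points of U^m_B are modelled by coordinates x, y :: nat => 'a (indices 0..m-1)
  and the value t of the regular function t, subject to x k * y k = t.\<close>

definition esym :: "nat \<Rightarrow> nat \<Rightarrow> (nat \<Rightarrow> 'a::comm_ring_1) \<Rightarrow> 'a" where
  "esym m j z = (\<Sum>S\<in>{S. S \<subseteq> {0..<m} \<and> card S = j}. \<Prod>k\<in>S. z k)"

definition Vmat :: "nat \<Rightarrow> nat \<Rightarrow> (nat \<Rightarrow> 'a::comm_ring_1) \<Rightarrow> (nat \<Rightarrow> 'a) \<Rightarrow> 'a mat" where
  "Vmat m i x y = mat m m (\<lambda>(r, k). if r \<le> m - i then x k ^ r else y k ^ (r - (m - i)))"

definition G1 :: "nat \<Rightarrow> (nat \<Rightarrow> 'a::comm_ring_1) \<Rightarrow> 'a" where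
  "G1 m x = (\<Prod>(a, b)\<in>{(a, b). a < b \<and> b < m}. x a - x b)"

text \<open>G_i = (sigma^y_m)^(i-1) / t^((i-1)(m - i/2)) * G_1; the exponent (i-1)(2m-i)/2 is an integer.\<close>
definition Gfun :: "nat \<Rightarrow> (nat \<Rightarrow> 'a::field) \<Rightarrow> (nat \<Rightarrow> 'a) \<Rightarrow> 'a \<Rightarrow> nat \<Rightarrow> 'a" where
  "Gfun m x y t i = (esym m m y) ^ (i - 1) / t ^ (((i - 1) * (2 * m - i)) div 2) * G1 m x"

end

theory Submission imports Defs begin

lemma det_row_scale:
  fixes A :: "'a::comm_ring_1 mat"
  assumes A: "A \<in> carrier_mat n n"
  shows "det (mat n n (\<lambda>(r,k). c r * A $$ (r,k))) = prod c {0..<n} * det A"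
proof -
  have "det (mat n n (\<lambda>(r,k). c r * A $$ (r,k))) =
     (\<Sum>p\<in>{p. p permutes {0..<n}}. signof p * (\<Prod>i=0..<n. c i * A $$ (i, p i)))"
  proof (rule trans[OF det_def'[where n=n]], simp, rule sum.cong, simp)
    fix p assume "p \<in> {p. p permutes {0..<n}}"
    hence "\<And>i. i < n \<Longrightarrow> p i < n" by (metis atLeastLessThan_iff mem_Collect_eq permutes_in_image zero_le)
    then show "signof p * (\<Prod>i = 0..<n. mat n n (\<lambda>(r, k). c r * A $$ (r, k)) $$ (i, p i)) =
         signof p * (\<Prod>i = 0..<n. c i * A $$ (i, p i))" by (auto intro!: prod.cong)
  qed
  also have "\<dots> = (\<Sum>p\<in>{p. p permutes {0..<n}}. prod c {0..<n} * (signof p * (\<Prod>i=0..<n. A $$ (i, p i))))"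
    by (simp add: prod.distrib ac_simps)
  also have "\<dots> = prod c {0..<n} * det A" by (simp add: det_def'[OF A] sum_distrib_left)
  finally show ?thesis .
qed

lemma det_col_scale:
  fixes A :: "'a::comm_ring_1 mat"
  assumes A: "A \<in> carrier_mat n n"
  shows "det (mat n n (\<lambda>(r,k). A $$ (r,k) * d k)) = prod d {0..<n} * det A"
proof -
  have "det (mat n n (\<lambda>(r,k). A $$ (r,k) * d k)) =
     (\<Sum>p\<in>{p. p permutes {0..<n}}. signof p * (\<Prod>i=0..<n. A $$ (i, p i) * d (p i)))"
  proof (rule trans[OF det_def'[where n=n]], simp, rule sum.cong, simp)
    fix p assume "p \<in> {p. p permutes {0..<n}}"
    hence "\<And>i. i < n \<Longrightarrow> p i < n" by (metis atLeastLessThan_iff mem_Collect_eq permutes_in_image zero_le)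
    then show "signof p * (\<Prod>i = 0..<n. mat n n (\<lambda>(r, k). A $$ (r, k) * d k) $$ (i, p i)) =
         signof p * (\<Prod>i = 0..<n. A $$ (i, p i) * d (p i))" by (auto intro!: prod.cong)
  qed
  also have "\<dots> = (\<Sum>p\<in>{p. p permutes {0..<n}}. prod d {0..<n} * (signof p * (\<Prod>i=0..<n. A $$ (i, p i))))"
  proof (rule sum.cong, simp)
    fix p assume "p \<in> {p. p permutes {0..<n}}"
    hence p: "p permutes {0..<n}" by simp
    have "(\<Prod>i=0..<n. d (p i)) = prod d {0..<n}" using prod.permute[OF p, of d] by (simp add: o_def)
    then show "signof p * (\<Prod>i = 0..<n. A $$ (i, p i) * d (p i)) = prod d {0..<n} * (signof p * (\<Prod>i = 0..<n. A $$ (i, p i)))"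
      by (simp add: prod.distrib ac_simps)
  qed
  also have "\<dots> = prod d {0..<n} * det A" by (simp add: det_def'[OF A] sum_distrib_left)
  finally show ?thesis .
qed

lemma vdm:
  fixes z :: "nat \<Rightarrow> 'a::comm_ring_1"
  shows "det (mat n n (\<lambda>(r,k). z k ^ r)) = (\<Prod>b<n. \<Prod>a<b. z b - z a)"
proof (induction n arbitrary: z)
  case 0
  then show ?case by (simp add: det_def)
next
  case (Suc n)
  define N where "N = Suc n"
  define V where "V = mat N N (\<lambda>(r,k). z k ^ r)"
  define L :: "'a mat" where "L = mat N N (\<lambda>(r,j). (if j = r then 1 else 0) + (if Suc j = r then - z 0 else 0))"
  define W where "W = mat N N (\<lambda>(r,k). if r = 0 then 1 else z k ^ (r - 1) * (z k - z 0))"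
  have V: "V \<in> carrier_mat N N" and L: "L \<in> carrier_mat N N" and Wc: "W \<in> carrier_mat N N"
    by (auto simp: V_def L_def W_def)
  have detL: "det L = 1"
    by (subst det_lower_triangular[OF _ L]) (auto simp: L_def prod_list_diag_prod intro!: prod.neutral)
  have LV: "L * V = W"
  proof (rule eq_matI)
    fix r k assume r: "r < dim_row W" and k: "k < dim_col W"
    hence r': "r < N" and k': "k < N" by (auto simp: W_def)
    have "(L * V) $$ (r,k) = (\<Sum>j<N. ((if j = r then 1 else 0) + (if Suc j = r then - z 0 else 0)) * z k ^ j)"
      using r' k' by (auto simp: L_def V_def scalar_prod_def times_mat_def intro!: sum.cong)
    also have "\<dots> = (\<Sum>j<N. (if j = r then z k ^ j else 0)) + (\<Sum>j<N. (if Suc j = r then - z 0 * z k ^ j else 0))"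
      by (subst sum.distrib[symmetric], rule sum.cong, auto)
    also have "\<dots> = W $$ (r,k)"
    proof (cases r)
      case 0 then show ?thesis using r' k' by (simp add: W_def)
    next
      case (Suc r0)
      have "(\<Sum>j<N. (if Suc j = r then - z 0 * z k ^ j else 0)) = (\<Sum>j<N. (if j = r0 then - z 0 * z k ^ j else 0))"
        using Suc by (intro sum.cong) auto
      also have "\<dots> = - z 0 * z k ^ r0" using Suc r' by simp
      finally show ?thesis using Suc r' k' by (simp add: W_def algebra_simps)
    qed
    finally show "(L * V) $$ (r,k) = W $$ (r,k)" .
  qed (auto simp: L_def V_def W_def)
  have "det V = det W" using det_mult[OF L V] detL LV by simp
  also have "det W = (\<Sum>i<N. W $$ (i,0) * cofactor W i 0)"
    by (rule laplace_expansion_column[OF Wc]) (simp add: N_def)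
  also have "\<dots> = (\<Sum>i<N. if i = 0 then cofactor W 0 0 else 0)"
    by (rule sum.cong) (auto simp: W_def N_def)
  also have "\<dots> = det (mat_delete W 0 0)" by (simp add: cofactor_def N_def)
  also have "mat_delete W 0 0 = mat n n (\<lambda>(r,k). (mat n n (\<lambda>(r,k). (\<lambda>k. z (Suc k)) k ^ r)) $$ (r,k) * (z (Suc k) - z 0))"
    by (rule eq_matI) (auto simp: mat_delete_def W_def N_def)
  also have "det \<dots> = (\<Prod>k=0..<n. z (Suc k) - z 0) * (\<Prod>b<n. \<Prod>a<b. z (Suc b) - z (Suc a))"
    by (subst det_col_scale) (auto simp: Suc)
  also have "\<dots> = (\<Prod>b<N. \<Prod>a<b. z b - z a)"
    unfolding N_def prod.lessThan_Suc_shift by (simp add: prod.distrib atLeast0LessThan)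
  finally show ?case by (simp add: V_def N_def)
qed

lemma esym_all: "esym m m y = (\<Prod>k<m. y k)"
proof -
  have "{S. S \<subseteq> {0..<m} \<and> card S = m} = {{0..<m}}"
    using card_subset_eq[of "{0..<m}"] by auto
  then show ?thesis by (simp add: esym_def atLeast0LessThan)
qed

definition pp :: "nat \<Rightarrow> nat \<Rightarrow> nat \<Rightarrow> nat" where
  "pp m i = (\<lambda>r. if r = 0 then m - i else if r \<le> m - i then r - 1 else r)"

lemma pp_permutes: assumes "1 \<le> i" "i \<le> m - 1" shows "pp m i permutes {0..<m}"
proof (rule bij_imp_permutes)
  define q where "q = (\<lambda>r::nat. if r = m - i then 0 else if r < m - i then r + 1 else r)"
  show "bij_betw (pp m i) {0..<m} {0..<m}"
    by (rule bij_betwI[where g=q]) (use assms in \<open>auto simp: pp_def q_def\<close>)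
  show "\<And>x. x \<notin> {0..<m} \<Longrightarrow> pp m i x = x" using assms by (auto simp: pp_def)
qed

lemma part1:
  fixes x y :: "nat \<Rightarrow> 'a::comm_ring_1"
  assumes i: "1 \<le> i" "i \<le> m - 1" and xy: "\<forall>k<m. x k * y k = t"
  shows "esym m m y * det (Vmat m i x y) = of_int (sign (pp m i)) * t ^ (m - i) * det (Vmat m (i + 1) x y)"
proof -
  define c where "c = (\<lambda>r::nat. if r \<in> {1..m-i} then t else 1)"
  have V1: "Vmat m i x y \<in> carrier_mat m m" and V2: "Vmat m (i+1) x y \<in> carrier_mat m m"
    by (auto simp: Vmat_def)
  have "esym m m y * det (Vmat m i x y) = det (mat m m (\<lambda>(r,k). Vmat m i x y $$ (r,k) * y k))"
    by (subst det_col_scale[OF V1]) (simp add: esym_all atLeast0LessThan)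
  also have "mat m m (\<lambda>(r,k). Vmat m i x y $$ (r,k) * y k) =
     mat m m (\<lambda>(r,k). c r * (mat m m (\<lambda>(r,k). Vmat m (i+1) x y $$ (pp m i r, k))) $$ (r,k))"
  proof (rule eq_matI)
    fix r k assume "r < dim_row (mat m m (\<lambda>(r,k). c r * (mat m m (\<lambda>(r,k). Vmat m (i+1) x y $$ (pp m i r, k))) $$ (r,k)))"
      "k < dim_col (mat m m (\<lambda>(r,k). c r * (mat m m (\<lambda>(r,k). Vmat m (i+1) x y $$ (pp m i r, k))) $$ (r,k)))"
    hence r: "r < m" and k: "k < m" by auto
    have ppr: "pp m i r < m" using r i by (auto simp: pp_def)
    have xyk: "x k * y k = t" using xy k by auto
    show "mat m m (\<lambda>(r,k). Vmat m i x y $$ (r,k) * y k) $$ (r,k) =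
       mat m m (\<lambda>(r,k). c r * (mat m m (\<lambda>(r,k). Vmat m (i+1) x y $$ (pp m i r, k))) $$ (r,k)) $$ (r,k)"
    proof (cases "r = 0")
      case True then show ?thesis using r k i ppr by (auto simp: Vmat_def pp_def c_def)
    next
      case False
      show ?thesis
      proof (cases "r \<le> m - i")
        case True
        then obtain r0 where r0: "r = Suc r0" using False by (cases r) auto
        have "x k ^ r * y k = t * x k ^ r0" proof -
          have "x k ^ r * y k = (x k * y k) * x k ^ r0" by (simp add: r0 ac_simps)
          then show ?thesis using xyk by simp
        qed
        then show ?thesis using r k i ppr True False r0 by (auto simp: Vmat_def pp_def c_def)
      next
        case nt: False
        have e: "r - (m - (i+1)) = Suc (r - (m - i))" using nt i r by auto
        have e2: "Suc (r + i) - m = Suc (r + i - m)" using nt i r by auto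
        show ?thesis using r k i ppr nt False by (auto simp: Vmat_def pp_def c_def e e2)
      qed
    qed
  qed auto
  also have "det \<dots> = prod c {0..<m} * (of_int (sign (pp m i)) * det (Vmat m (i+1) x y))"
    using det_permute_rows[OF V2 pp_permutes[OF i]]
    by (subst det_row_scale) (auto simp del: One_nat_def add_Suc_right simp add: Suc_eq_plus1)
  also have "prod c {0..<m} = t ^ (m - i)"
  proof -
    have e: "{0..<m} \<inter> {r. r \<in> {1..m-i}} = {1..m-i}" using i by auto
    have "prod c {0..<m} = prod (\<lambda>_. t) {1..m-i} * prod (\<lambda>_. 1) ({0..<m} \<inter> - {r. r \<in> {1..m-i}})"
      unfolding c_def prod.If_cases[of "{0..<m}" "\<lambda>r. r \<in> {1..m-i}" "\<lambda>_. t" "\<lambda>_. 1", OF finite_atLeastLessThan] e ..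
    then show ?thesis by simp
  qed
  finally show ?thesis by (simp add: ac_simps)
qed

lemma esym_swap:
  fixes x y :: "nat \<Rightarrow> 'a::comm_ring_1"
  assumes j: "j \<le> m" and xy: "\<forall>k<m. x k * y k = t"
  shows "esym m j x * (\<Prod>k<m. y k) = t ^ j * esym m (m - j) y"
proof -
  define A where "A = {0..<m}"
  define C where "C = (\<lambda>j. {S. S \<subseteq> A \<and> card S = j})"
  have "esym m j x * (\<Prod>k<m. y k) = (\<Sum>S\<in>C j. (\<Prod>k\<in>S. x k) * prod y A)"
    by (simp add: esym_def sum_distrib_right C_def A_def atLeast0LessThan)
  also have "\<dots> = (\<Sum>S\<in>C j. t ^ j * prod y (A - S))"
  proof (rule sum.cong, simp)
    fix S assume "S \<in> C j"
    hence S: "S \<subseteq> A" "card S = j" by (auto simp: C_def)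
    have fS: "finite S" using S finite_subset by (auto simp: A_def)
    have "prod y A = prod y (A - S) * prod y S" using prod.subset_diff[OF S(1)] by (simp add: A_def)
    moreover have "(\<Prod>k\<in>S. x k) * prod y S = (\<Prod>k\<in>S. t)"
      unfolding prod.distrib[symmetric] using S xy by (intro prod.cong) (auto simp: A_def)
    ultimately have "(\<Prod>k\<in>S. x k) * prod y A = (\<Prod>k\<in>S. t) * prod y (A - S)"
    proof -
      assume a1: "prod y A = prod y (A - S) * prod y S" and a2: "(\<Prod>k\<in>S. x k) * prod y S = (\<Prod>k\<in>S. t)"
      have "(\<Prod>k\<in>S. x k) * prod y A = ((\<Prod>k\<in>S. x k) * prod y S) * prod y (A - S)"
        unfolding a1 by (simp only: ac_simps)
      then show ?thesis unfolding a2 .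
    qed
    then show "(\<Prod>k\<in>S. x k) * prod y A = t ^ j * prod y (A - S)" using S by simp
  qed
  also have "\<dots> = t ^ j * (\<Sum>S\<in>C j. prod y (A - S))" by (simp add: sum_distrib_left)
  also have "(\<Sum>S\<in>C j. prod y (A - S)) = (\<Sum>T\<in>C (m - j). prod y T)"
  proof (rule sum.reindex_bij_betw)
    show "bij_betw (\<lambda>S. A - S) (C j) (C (m - j))"
    proof (rule bij_betwI[where g="\<lambda>S. A - S"])
      show "(\<lambda>S. A - S) \<in> C j \<rightarrow> C (m - j)"
        by (auto simp: C_def A_def card_Diff_subset finite_subset)
      show "(\<lambda>S. A - S) \<in> C (m - j) \<rightarrow> C j"
        using j by (auto simp: C_def A_def card_Diff_subset finite_subset)
    qed (auto simp: C_def)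
  qed
  finally show ?thesis by (simp add: esym_def C_def A_def)
qed

lemma prod_cmult: "(\<Prod>p\<in>P. c * g p) = c ^ card P * prod g P"
  by (simp add: prod.distrib)

lemma pairprod: "(\<Prod>(a, b)\<in>{(a, b). a < b \<and> b < (m::nat)}. f a b) = (\<Prod>b<m. \<Prod>a<b. f a b)"
proof -
  have e: "{(a, b). a < b \<and> b < m} = (\<lambda>(b,a). (a,b)) ` (SIGMA b:{..<m}. {..<b})" by auto
  have inj: "inj_on (\<lambda>(b,a). (a,b)) (SIGMA b:{..<m}. {..<b})" by (auto simp: inj_on_def)
  have "(\<Prod>b<m. \<Prod>a<b. f a b) = (\<Prod>(b,a)\<in>(SIGMA b:{..<m}. {..<b}). f a b)"
    by (rule prod.Sigma) auto
  then show ?thesis unfolding e prod.reindex[OF inj]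
    by (simp add: o_def case_prod_beta)
qed

lemma pairprod_neg:
  fixes z :: "nat \<Rightarrow> 'a::comm_ring_1"
  shows "(\<Prod>(a, b)\<in>{(a, b). a < b \<and> b < m}. z a - z b) =
    of_int ((-1) ^ card {(a, b). a < b \<and> b < (m::nat)}) * det (mat m m (\<lambda>(r,k). z k ^ r))"
proof -
  have "(\<Prod>(a, b)\<in>{(a, b). a < b \<and> b < m}. z a - z b) = (\<Prod>(a, b)\<in>{(a, b). a < b \<and> b < m}. (-1) * (z b - z a))"
    by (rule prod.cong) auto
  also have "\<dots> = (-1) ^ card {(a, b). a < b \<and> b < m} * (\<Prod>(a, b)\<in>{(a, b). a < b \<and> b < m}. z b - z a)"
    using prod_cmult[of "-1" "\<lambda>(a,b). z b - z a" "{(a, b). a < b \<and> b < m}"]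
    by (simp add: case_prod_beta)
  finally show ?thesis by (simp add: pairprod vdm)
qed

lemma expo: fixes i m :: nat assumes "1 \<le> i" "i \<le> m - 1"
  shows "((i + 1 - 1) * (2 * m - (i + 1))) div 2 = ((i - 1) * (2 * m - i)) div 2 + (m - i)"
proof -
  have "i = (i - 1) + 1" using assms by simp
  then obtain j where j: "i = j + 1" by blast
  have "m = j + (m - i - 1) + 2" using assms j by linarith
  then obtain k where k: "m = j + k + 2" by blast
  have "(j+1)*(j+2*k+2) = j*(j+2*k+3) + 2*(k+1)" by (simp add: algebra_simps)
  moreover have "2 * m - (i + 1) = j+2*k+2" "2 * m - i = j + 2*k+3" "m - i = k + 1" using j k by auto
  ultimately show ?thesis using j by (simp only: add_diff_cancel_right') simp
qed

lemma Gstep: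
  fixes x y :: "nat \<Rightarrow> 'b::field"
  assumes i: "1 \<le> i" "i \<le> m - 1" and t: "t \<noteq> 0"
  shows "Gfun m x y t (i + 1) = esym m m y / t ^ (m - i) * Gfun m x y t i"
proof -
  have "Gfun m x y t (i + 1) = esym m m y ^ (Suc (i - 1)) / t ^ (((i - 1) * (2 * m - i)) div 2 + (m - i)) * G1 m x"
  proof -
    have e: "i + 1 - 1 = Suc (i - 1)" using i by simp
    show ?thesis unfolding Gfun_def expo[OF i, symmetric] e ..
  qed
  also have "\<dots> = esym m m y / t ^ (m - i) * Gfun m x y t i"
    unfolding Gfun_def using t by (simp add: power_add field_simps)
  finally show ?thesis .
qed

lemma m1pow: "((-1::int) ^ n) \<in> {1, -1}"
  by (cases "even n") auto

lemma sign_in: "sign p \<in> {1, -1::int}"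
  by (simp add: sign_def)

lemma V1eq: "Vmat m 1 x y = mat m m (\<lambda>(r,k). x k ^ r)"
  by (rule eq_matI) (auto simp: Vmat_def)

lemma Vmeq: "Vmat m m x y = mat m m (\<lambda>(r,k). y k ^ r)"
  by (rule eq_matI) (auto simp: Vmat_def)

lemma part2:
  fixes m i :: nat
  assumes "1 \<le> i" "i \<le> m"
  shows "\<exists>\<epsilon>::int. \<epsilon> \<in> {1, -1} \<and>
        (\<forall>(x :: nat \<Rightarrow> 'b::field) y t. t \<noteq> 0 \<and> (\<forall>k<m. x k * y k = t) \<longrightarrow>
           Gfun m x y t i = of_int \<epsilon> * det (Vmat m i x y))"
  using assms
proof (induction i)
  case 0 then show ?case by simp
next
  case (Suc i)
  show ?case
  proof (cases "i = 0")
    case True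
    show ?thesis
    proof (intro exI conjI allI impI)
      show "(-1::int) ^ card {(a, b). a < b \<and> b < m} \<in> {1, -1}" by (rule m1pow)
      fix x y :: "nat \<Rightarrow> 'b" and t
      show "Gfun m x y t (Suc i) = of_int ((-1) ^ card {(a, b). a < b \<and> b < m}) * det (Vmat m (Suc i) x y)"
        using True by (simp add: Gfun_def G1_def pairprod_neg V1eq[unfolded One_nat_def])
    qed
  next
    case False
    hence i: "1 \<le> i" "i \<le> m - 1" using Suc by auto
    obtain \<epsilon> where e: "\<epsilon> \<in> {1, -1::int}" and IH: "\<forall>(x :: nat \<Rightarrow> 'b::field) y t. t \<noteq> 0 \<and> (\<forall>k<m. x k * y k = t) \<longrightarrow>
           Gfun m x y t i = of_int \<epsilon> * det (Vmat m i x y)"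
      using Suc False by auto
    show ?thesis
    proof (intro exI conjI allI impI)
      show "\<epsilon> * sign (pp m i) \<in> {1, -1}" using e sign_in[of "pp m i"] by auto
      fix x y :: "nat \<Rightarrow> 'b" and t
      assume h: "t \<noteq> 0 \<and> (\<forall>k<m. x k * y k = t)"
      have "Gfun m x y t (Suc i) = esym m m y / t ^ (m - i) * Gfun m x y t i"
        using Gstep[OF i, of t x y] h by simp
      also have "\<dots> = of_int \<epsilon> / t ^ (m - i) * (esym m m y * det (Vmat m i x y))"
        using IH h by simp
      also have "\<dots> = of_int \<epsilon> / t ^ (m - i) * (of_int (sign (pp m i)) * t ^ (m - i) * det (Vmat m (i + 1) x y))"
        using part1[OF i, of x y t] h by simp
      also have "\<dots> = of_int (\<epsilon> * sign (pp m i)) * det (Vmat m (Suc i) x y)"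
        using h by simp
      finally show "Gfun m x y t (Suc i) = of_int (\<epsilon> * sign (pp m i)) * det (Vmat m (Suc i) x y)" .
    qed
  qed
qed

theorem mainTheorem3:
  fixes m :: nat
  assumes "1 \<le> m"
  shows
   "(\<forall>i. 1 \<le> i \<and> i \<le> m - 1 \<longrightarrow>
      (\<exists>\<epsilon>::int. \<epsilon> \<in> {1, -1} \<and>
        (\<forall>(x :: nat \<Rightarrow> 'a::comm_ring_1) y t. (\<forall>k<m. x k * y k = t) \<longrightarrow>
           esym m m y * det (Vmat m i x y) = of_int \<epsilon> * t ^ (m - i) * det (Vmat m (i + 1) x y))))
    \<and> (\<forall>i. 1 \<le> i \<and> i \<le> m \<longrightarrow>
      (\<exists>\<epsilon>::int. \<epsilon> \<in> {1, -1} \<and>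
        (\<forall>(x :: nat \<Rightarrow> 'b::field) y t. t \<noteq> 0 \<and> (\<forall>k<m. x k * y k = t) \<longrightarrow>
           Gfun m x y t i = of_int \<epsilon> * det (Vmat m i x y))))
    \<and> (\<exists>\<epsilon>::int. \<epsilon> \<in> {1, -1} \<and>
        (\<forall>(x :: nat \<Rightarrow> 'b::field) y t. t \<noteq> 0 \<and> (\<forall>k<m. x k * y k = t) \<longrightarrow>
           Gfun m x y t m = of_int \<epsilon> * (\<Prod>(a, b)\<in>{(a, b). a < b \<and> b < m}. y a - y b)))
    \<and> (\<forall>i. 1 \<le> i \<and> i \<le> m - 1 \<longrightarrow>
        (\<forall>(x :: nat \<Rightarrow> 'b::field) y t. t \<noteq> 0 \<and> (\<forall>k<m. x k * y k = t) \<longrightarrow>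
           esym m (m - i) x * Gfun m x y t (i + 1) = esym m i y * Gfun m x y t i))"
proof (intro conjI allI impI)
  fix i assume i: "1 \<le> i \<and> i \<le> m - 1"
  show "\<exists>\<epsilon>::int. \<epsilon> \<in> {1, -1} \<and>
        (\<forall>(x :: nat \<Rightarrow> 'a::comm_ring_1) y t. (\<forall>k<m. x k * y k = t) \<longrightarrow>
           esym m m y * det (Vmat m i x y) = of_int \<epsilon> * t ^ (m - i) * det (Vmat m (i + 1) x y))"
    using part1 i sign_in by blast
next
  fix i assume i: "1 \<le> i \<and> i \<le> m"
  then show "\<exists>\<epsilon>::int. \<epsilon> \<in> {1, -1} \<and>
        (\<forall>(x :: nat \<Rightarrow> 'b::field) y t. t \<noteq> 0 \<and> (\<forall>k<m. x k * y k = t) \<longrightarrow>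
           Gfun m x y t i = of_int \<epsilon> * det (Vmat m i x y))"
    using part2 by blast
next
  obtain \<epsilon> where e: "\<epsilon> \<in> {1, -1::int}" and G: "\<forall>(x :: nat \<Rightarrow> 'b::field) y t. t \<noteq> 0 \<and> (\<forall>k<m. x k * y k = t) \<longrightarrow>
           Gfun m x y t m = of_int \<epsilon> * det (Vmat m m x y)"
    using part2[of m m] assms by blast
  define c :: int where "c = (-1) ^ card {(a, b). a < b \<and> b < m}"
  have c2: "c * c = 1" unfolding c_def by (simp add: power_mult_distrib[symmetric])
  show "\<exists>\<epsilon>::int. \<epsilon> \<in> {1, -1} \<and>
        (\<forall>(x :: nat \<Rightarrow> 'b::field) y t. t \<noteq> 0 \<and> (\<forall>k<m. x k * y k = t) \<longrightarrow>
           Gfun m x y t m = of_int \<epsilon> * (\<Prod>(a, b)\<in>{(a, b). a < b \<and> b < m}. y a - y b))"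
  proof (intro exI conjI allI impI)
    have "c \<in> {1, -1}" unfolding c_def by (rule m1pow)
    then show "\<epsilon> * c \<in> {1, -1}" using e by auto
    fix x y :: "nat \<Rightarrow> 'b" and t
    assume h: "t \<noteq> 0 \<and> (\<forall>k<m. x k * y k = t)"
    have P: "(\<Prod>(a, b)\<in>{(a, b). a < b \<and> b < m}. y a - y b) = of_int c * det (Vmat m m x y)"
      unfolding c_def Vmeq by (rule pairprod_neg)
    have "of_int (\<epsilon> * c) * (\<Prod>(a, b)\<in>{(a, b). a < b \<and> b < m}. y a - y b) = of_int \<epsilon> * (of_int (c * c) * det (Vmat m m x y))"
      unfolding P by (simp add: ac_simps)
    also have "\<dots> = Gfun m x y t m" using G h c2 by simp
    finally show "Gfun m x y t m = of_int (\<epsilon> * c) * (\<Prod>(a, b)\<in>{(a, b). a < b \<and> b < m}. y a - y b)" by simp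
  qed
next
  fix i :: nat and x y and t :: 'b
  assume i: "1 \<le> i \<and> i \<le> m - 1" and h: "t \<noteq> 0 \<and> (\<forall>k<m. x k * y k = t)"
  have i1: "1 \<le> i" "i \<le> m - 1" using i by auto
  have ES: "esym m (m - i) x * esym m m y = t ^ (m - i) * esym m i y"
  proof -
    have mm: "m - (m - i) = i" using i by arith
    show ?thesis using esym_swap[of "m - i" m x y t] h unfolding mm by (simp add: esym_all)
  qed
  have "esym m (m - i) x * Gfun m x y t (i + 1) = (esym m (m - i) x * esym m m y) / t ^ (m - i) * Gfun m x y t i"
    using Gstep[OF i1, of t x y] h by simp
  also have "\<dots> = esym m i y * Gfun m x y t i" unfolding ES using h by simp
  finally show "esym m (m - i) x * Gfun m x y t (i + 1) = esym m i y * Gfun m x y t i" .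
qed

end
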